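(* Fix $n\in\mathbb N$. Let $\mathfrak M\models\mathrm{I}\Delta_0$ and $a\in M$. Then: (1) $a+1\in\Sigma_n\text{-}\mathrm{Card}^{\mathfrak M}(a)$ if and only if $\Sigma_n\text{-}\mathrm{Card}^{\mathfrak M}(a)$ is closed under $x\mapsto x+1$; (2) $2a\in\Sigma_n\text{-}\mathrm{Card}^{\mathfrak M}(a)$ if and only if $\Sigma_n\text{-}\mathrm{Card}^{\mathfrak M}(a)$ is closed under $x\mapsto2x$; (3) $a^2\in\Sigma_n\text{-}\mathrm{Card}^{\mathfrak M}(a)$ if and only if $\Sigma_n\text{-}\mathrm{Card}^{\mathfrak M}(a)$ is closed under $x\mapsto x^2$.
   Context: $\mathrm{I}\Delta_0$ is first-order arithmetic with induction for bounded formulas. Numbers $x$ are identified with $\{v:v<x\}$. For $\mathfrak M\models\mathrm{I}\Delta_0$ and $a\in M$, $\Sigma_n\text{-}\mathrm{Card}^{\mathfrak M}(a)=\{b\in M:$ in $\mathfrak M$ there is an injection from $b$ into $a$ whose graph is definable by a $\Sigma_n$ formula with parameters$\}$. *)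

theory Defs
  imports Main
begin

datatype trm = Var nat | Zero | Succ trm | Plus trm trm | Times trm trm

datatype fm = Eq trm trm | Lt trm trm | Neg fm | Conj fm fm | Ex nat fm

definition All :: "nat \<Rightarrow> fm \<Rightarrow> fm" where
  "All x \<phi> = Neg (Ex x (Neg \<phi>))"

fun tvars :: "trm \<Rightarrow> nat set" where
  "tvars (Var x) = {x}"
| "tvars Zero = {}"
| "tvars (Succ t) = tvars t"
| "tvars (Plus s t) = tvars s \<union> tvars t"
| "tvars (Times s t) = tvars s \<union> tvars t"

text \<open>An L_A-structure; the universe is the whole type 'a.\<close>
record 'a struc =
  zer :: 'a
  suc :: "'a \<Rightarrow> 'a"
  pls :: "'a \<Rightarrow> 'a \<Rightarrow> 'a"
  tms :: "'a \<Rightarrow> 'a \<Rightarrow> 'a"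
  lss :: "'a \<Rightarrow> 'a \<Rightarrow> bool"

fun teval :: "'a struc \<Rightarrow> (nat \<Rightarrow> 'a) \<Rightarrow> trm \<Rightarrow> 'a" where
  "teval M e (Var x) = e x"
| "teval M e Zero = zer M"
| "teval M e (Succ t) = suc M (teval M e t)"
| "teval M e (Plus s t) = pls M (teval M e s) (teval M e t)"
| "teval M e (Times s t) = tms M (teval M e s) (teval M e t)"

fun sat :: "'a struc \<Rightarrow> (nat \<Rightarrow> 'a) \<Rightarrow> fm \<Rightarrow> bool" where
  "sat M e (Eq s t) = (teval M e s = teval M e t)"
| "sat M e (Lt s t) = lss M (teval M e s) (teval M e t)"
| "sat M e (Neg \<phi>) = (\<not> sat M e \<phi>)"
| "sat M e (Conj \<phi> \<psi>) = (sat M e \<phi> \<and> sat M e \<psi>)"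
| "sat M e (Ex x \<phi>) = (\<exists>u. sat M (e(x := u)) \<phi>)"

inductive delta0 :: "fm \<Rightarrow> bool" where
  "delta0 (Eq s t)"
| "delta0 (Lt s t)"
| "delta0 \<phi> \<Longrightarrow> delta0 (Neg \<phi>)"
| "delta0 \<phi> \<Longrightarrow> delta0 \<psi> \<Longrightarrow> delta0 (Conj \<phi> \<psi>)"
| "x \<notin> tvars t \<Longrightarrow> delta0 \<phi> \<Longrightarrow> delta0 (Ex x (Conj (Lt (Var x) t) \<phi>))"

inductive sigma :: "nat \<Rightarrow> fm \<Rightarrow> bool" and pi :: "nat \<Rightarrow> fm \<Rightarrow> bool" where
  "delta0 \<phi> \<Longrightarrow> sigma n \<phi>"
| "delta0 \<phi> \<Longrightarrow> pi n \<phi>"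
| "pi n \<phi> \<Longrightarrow> sigma (Suc n) \<phi>"
| "sigma n \<phi> \<Longrightarrow> pi (Suc n) \<phi>"
| "sigma (Suc n) \<phi> \<Longrightarrow> sigma (Suc n) (Ex x \<phi>)"
| "pi (Suc n) \<phi> \<Longrightarrow> pi (Suc n) (All x \<phi>)"

definition IDelta0_model :: "'a struc \<Rightarrow> bool" where
  "IDelta0_model M \<longleftrightarrow>
     (\<forall>x. suc M x \<noteq> zer M) \<and>
     (\<forall>x y. suc M x = suc M y \<longrightarrow> x = y) \<and>
     (\<forall>x. pls M x (zer M) = x) \<and>
     (\<forall>x y. pls M x (suc M y) = suc M (pls M x y)) \<and>
     (\<forall>x. tms M x (zer M) = zer M) \<and>
     (\<forall>x y. tms M x (suc M y) = pls M (tms M x y) x) \<and>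
     (\<forall>x y. lss M x y \<longleftrightarrow> (\<exists>z. pls M x (suc M z) = y)) \<and>
     (\<forall>\<phi> v e. delta0 \<phi> \<longrightarrow>
        sat M (e(v := zer M)) \<phi> \<longrightarrow>
        (\<forall>u. sat M (e(v := u)) \<phi> \<longrightarrow> sat M (e(v := suc M u)) \<phi>) \<longrightarrow>
        (\<forall>u. sat M (e(v := u)) \<phi>))"

text \<open>b \<in> Sigma_n-Card(a): there is a Sigma_n formula (with parameters, given by the
  environment e) whose defined binary relation is the graph of an injection
  from b = {v. v < b} into a = {v. v < a}.\<close>
definition SigmaCard :: "nat \<Rightarrow> 'a struc \<Rightarrow> 'a \<Rightarrow> 'a set" where
  "SigmaCard n M a = {b. \<exists>\<phi> x y e. sigma n \<phi> \<and> x \<noteq> y \<and>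
      (let R = (\<lambda>u w. sat M (e(x := u, y := w)) \<phi>) in
         (\<forall>u w. R u w \<longrightarrow> lss M u b \<and> lss M w a) \<and>
         (\<forall>u. lss M u b \<longrightarrow> (\<exists>!w. R u w)) \<and>
         (\<forall>u u' w. R u w \<longrightarrow> R u' w \<longrightarrow> u = u'))}"

end

theory Submission
  imports Defs
begin


fun vars :: "fm \<Rightarrow> nat set" where
  "vars (Eq s t) = tvars s \<union> tvars t"
| "vars (Lt s t) = tvars s \<union> tvars t"
| "vars (Neg \<phi>) = vars \<phi>"
| "vars (Conj \<phi> \<psi>) = vars \<phi> \<union> vars \<psi>"
| "vars (fm.Ex x \<phi>) = insert x (vars \<phi>)"

fun bvars :: "fm \<Rightarrow> nat set" where
  "bvars (Eq s t) = {}"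
| "bvars (Lt s t) = {}"
| "bvars (Neg \<phi>) = bvars \<phi>"
| "bvars (Conj \<phi> \<psi>) = bvars \<phi> \<union> bvars \<psi>"
| "bvars (fm.Ex x \<phi>) = insert x (bvars \<phi>)"

lemma bvars_sub: "bvars \<phi> \<subseteq> vars \<phi>"
  by (induct \<phi>) auto

lemma teval_cong: "(\<forall>v\<in>tvars t. e v = e' v) \<Longrightarrow> teval M e t = teval M e' t"
  by (induct t) auto

lemma sat_cong: "(\<forall>v\<in>vars \<phi>. e v = e' v) \<Longrightarrow> sat M e \<phi> = sat M e' \<phi>"
proof (induct \<phi> arbitrary: e e')
  case (Eq s t) then show ?case using teval_cong[of s e e' M] teval_cong[of t e e' M] by auto
next
  case (Lt s t) then show ?case using teval_cong[of s e e' M] teval_cong[of t e e' M] by auto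
next
  case (Neg \<phi>) then show ?case by auto
next
  case (Conj \<phi> \<psi>) then show ?case by (metis UnCI sat.simps(4) vars.simps(4))
next
  case (Ex x \<phi>)
  have "\<And>u. sat M (e(x:=u)) \<phi> = sat M (e'(x:=u)) \<phi>"
    using Ex.prems by (intro Ex.hyps) auto
  then show ?case by simp
qed

lemma vars_All[simp]: "vars (Defs.All x \<phi>) = insert x (vars \<phi>)"
  by (simp add: All_def)
lemma bvars_All[simp]: "bvars (Defs.All x \<phi>) = insert x (bvars \<phi>)"
  by (simp add: All_def)
lemma sat_All[simp]: "sat M e (Defs.All x \<phi>) = (\<forall>u. sat M (e(x:=u)) \<phi>)"
  by (simp add: All_def)

definition Disj :: "fm \<Rightarrow> fm \<Rightarrow> fm" where
  "Disj \<phi> \<psi> = Neg (Conj (Neg \<phi>) (Neg \<psi>))"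

lemma sat_Disj[simp]: "sat M e (Disj \<phi> \<psi>) = (sat M e \<phi> \<or> sat M e \<psi>)"
  by (simp add: Disj_def)
lemma delta0_Disj: "delta0 \<phi> \<Longrightarrow> delta0 \<psi> \<Longrightarrow> delta0 (Disj \<phi> \<psi>)"
  unfolding Disj_def by (intro delta0.intros)

fun exs :: "nat list \<Rightarrow> fm \<Rightarrow> fm" where
  "exs [] \<phi> = \<phi>"
| "exs (x#xs) \<phi> = fm.Ex x (exs xs \<phi>)"

fun alls :: "nat list \<Rightarrow> fm \<Rightarrow> fm" where
  "alls [] \<phi> = \<phi>"
| "alls (x#xs) \<phi> = Defs.All x (alls xs \<phi>)"

lemma vars_exs[simp]: "vars (exs xs \<phi>) = set xs \<union> vars \<phi>"
  by (induct xs) auto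
lemma bvars_exs[simp]: "bvars (exs xs \<phi>) = set xs \<union> bvars \<phi>"
  by (induct xs) auto
lemma vars_alls[simp]: "vars (alls xs \<phi>) = set xs \<union> vars \<phi>"
  by (induct xs) auto
lemma bvars_alls[simp]: "bvars (alls xs \<phi>) = set xs \<union> bvars \<phi>"
  by (induct xs) auto

lemma sat_exs: "sat M e (exs xs \<phi>) = (\<exists>e'. (\<forall>v. v \<notin> set xs \<longrightarrow> e' v = e v) \<and> sat M e' \<phi>)"
proof (induct xs arbitrary: e)
  case Nil
  then show ?case by (auto intro: ext)
next
  case (Cons x xs)
  show ?case
  proof
    assume "sat M e (exs (x # xs) \<phi>)"
    then obtain u e' where "\<forall>v. v \<notin> set xs \<longrightarrow> e' v = (e(x:=u)) v" "sat M e' \<phi>"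
      using Cons by auto
    then show "\<exists>e'. (\<forall>v. v \<notin> set (x # xs) \<longrightarrow> e' v = e v) \<and> sat M e' \<phi>"
      by (intro exI[of _ e']) auto
  next
    assume "\<exists>e'. (\<forall>v. v \<notin> set (x # xs) \<longrightarrow> e' v = e v) \<and> sat M e' \<phi>"
    then obtain e' where a: "\<forall>v. v \<notin> set (x # xs) \<longrightarrow> e' v = e v" "sat M e' \<phi>" by blast
    then have "\<forall>v. v \<notin> set xs \<longrightarrow> e' v = (e(x:=e' x)) v" by auto
    then have "sat M (e(x:=e' x)) (exs xs \<phi>)" using Cons a by blast
    then show "sat M e (exs (x # xs) \<phi>)" by auto
  qed
qed

lemma sat_alls: "sat M e (alls xs \<phi>) = (\<forall>e'. (\<forall>v. v \<notin> set xs \<longrightarrow> e' v = e v) \<longrightarrow> sat M e' \<phi>)"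
proof (induct xs arbitrary: e)
  case Nil
  then show ?case by (auto intro: ext)
next
  case (Cons x xs)
  show ?case
  proof
    assume h: "sat M e (alls (x # xs) \<phi>)"
    show "\<forall>e'. (\<forall>v. v \<notin> set (x # xs) \<longrightarrow> e' v = e v) \<longrightarrow> sat M e' \<phi>"
    proof (intro allI impI)
      fix e' assume a: "\<forall>v. v \<notin> set (x # xs) \<longrightarrow> e' v = e v"
      then have "\<forall>v. v \<notin> set xs \<longrightarrow> e' v = (e(x:=e' x)) v" by auto
      moreover have "sat M (e(x:=e' x)) (alls xs \<phi>)" using h by simp
      ultimately show "sat M e' \<phi>" using Cons by blast
    qed
  next
    assume h: "\<forall>e'. (\<forall>v. v \<notin> set (x # xs) \<longrightarrow> e' v = e v) \<longrightarrow> sat M e' \<phi>"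
    have "sat M (e(x:=u)) (alls xs \<phi>)" for u
      unfolding Cons using h by auto
    then show "sat M e (alls (x # xs) \<phi>)" by simp
  qed
qed


lemma normal_form:
  shows nf1: "sigma n \<phi> \<Longrightarrow> (n = 0 \<longrightarrow> delta0 \<phi>) \<and> (\<forall>m. n = Suc m \<longrightarrow> (\<exists>xs \<theta>. \<phi> = exs xs \<theta> \<and> pi m \<theta>))"
    and nf2: "pi n' \<phi>' \<Longrightarrow> (n' = 0 \<longrightarrow> delta0 \<phi>') \<and> (\<forall>m. n' = Suc m \<longrightarrow> (\<exists>xs \<theta>. \<phi>' = alls xs \<theta> \<and> sigma m \<theta>))"
proof (induct rule: sigma_pi.inducts)
  case (1 \<phi> n)
  then show ?case by (metis exs.simps(1) sigma_pi.intros(2))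
next
  case (2 \<phi> n)
  then show ?case by (metis alls.simps(1) sigma_pi.intros(1))
next
  case (3 n \<phi>)
  then show ?case by (metis exs.simps(1) nat.distinct(1) nat.inject)
next
  case (4 n \<phi>)
  then show ?case by (metis alls.simps(1) nat.distinct(1) nat.inject)
next
  case (5 n \<phi> x)
  then show ?case by (metis exs.simps(2) nat.distinct(1))
next
  case (6 n \<phi> x)
  then show ?case by (metis alls.simps(2) nat.distinct(1))
qed

lemma sigma0_delta0: "sigma 0 \<phi> \<Longrightarrow> delta0 \<phi>"
  using nf1 nf2 by blast
lemma pi0_delta0: "pi 0 \<phi> \<Longrightarrow> delta0 \<phi>"
  using nf1 nf2 by blast
lemma sigmaSuc_nf: "sigma (Suc m) \<phi> \<Longrightarrow> \<exists>xs \<theta>. \<phi> = exs xs \<theta> \<and> pi m \<theta>"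
  using nf1 nf2 by blast
lemma piSuc_nf: "pi (Suc m) \<phi> \<Longrightarrow> \<exists>xs \<theta>. \<phi> = alls xs \<theta> \<and> sigma m \<theta>"
  using nf1 nf2 by blast

lemma exs_sigma: "pi m \<theta> \<Longrightarrow> sigma (Suc m) (exs xs \<theta>)"
  by (induct xs) (auto intro: sigma_pi.intros)
lemma alls_pi: "sigma m \<theta> \<Longrightarrow> pi (Suc m) (alls xs \<theta>)"
  by (induct xs) (auto intro: sigma_pi.intros)

lemma exs_append: "exs (xs @ ys) \<theta> = exs xs (exs ys \<theta>)"
  by (induct xs) auto
lemma alls_append: "alls (xs @ ys) \<theta> = alls xs (alls ys \<theta>)"
  by (induct xs) auto

lemma ex_conj:
  assumes d1: "set ys \<inter> vars \<theta> = {}" and d2: "set xs \<inter> vars \<theta>' = {}"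
    and c: "\<forall>e. sat M e \<chi> \<longleftrightarrow> sat M e \<theta> \<and> sat M e \<theta>'"
  shows "sat M e (exs (xs@ys) \<chi>) \<longleftrightarrow> sat M e (exs xs \<theta>) \<and> sat M e (exs ys \<theta>')"
proof
  assume "sat M e (exs (xs@ys) \<chi>)"
  then obtain e' where e': "\<forall>v. v \<notin> set (xs@ys) \<longrightarrow> e' v = e v" "sat M e' \<theta>" "sat M e' \<theta>'"
    unfolding sat_exs using c by blast
  define e1 where "e1 = (\<lambda>v. if v \<in> set xs then e' v else e v)"
  define e2 where "e2 = (\<lambda>v. if v \<in> set ys then e' v else e v)"
  have "sat M e1 \<theta>" using e' d1 by (subst sat_cong[of _ e1 e']) (auto simp: e1_def)
  moreover have "sat M e2 \<theta>'" using e' d2 by (subst sat_cong[of _ e2 e']) (auto simp: e2_def)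
  moreover have "\<forall>v. v \<notin> set xs \<longrightarrow> e1 v = e v" "\<forall>v. v \<notin> set ys \<longrightarrow> e2 v = e v"
    by (auto simp: e1_def e2_def)
  ultimately show "sat M e (exs xs \<theta>) \<and> sat M e (exs ys \<theta>')"
    unfolding sat_exs by blast
next
  assume "sat M e (exs xs \<theta>) \<and> sat M e (exs ys \<theta>')"
  then obtain e1 e2 where e1: "\<forall>v. v \<notin> set xs \<longrightarrow> e1 v = e v" "sat M e1 \<theta>"
    and e2: "\<forall>v. v \<notin> set ys \<longrightarrow> e2 v = e v" "sat M e2 \<theta>'"
    unfolding sat_exs by blast
  define e' where "e' = (\<lambda>v. if v \<in> set xs then e1 v else e2 v)"
  have "sat M e' \<theta>" using e1 e2 d1 by (subst sat_cong[of _ e' e1]) (auto simp: e'_def)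
  moreover have "sat M e' \<theta>'" using e1 e2 d2 by (subst sat_cong[of _ e' e2]) (auto simp: e'_def)
  moreover have "\<forall>v. v \<notin> set (xs@ys) \<longrightarrow> e' v = e v" using e1 e2 by (auto simp: e'_def)
  ultimately show "sat M e (exs (xs@ys) \<chi>)" unfolding sat_exs using c by blast
qed

lemma ex_disj:
  assumes d1: "set ys \<inter> vars \<theta> = {}" and d2: "set xs \<inter> vars \<theta>' = {}"
    and c: "\<forall>e. sat M e \<chi> \<longleftrightarrow> sat M e \<theta> \<or> sat M e \<theta>'"
  shows "sat M e (exs (xs@ys) \<chi>) \<longleftrightarrow> sat M e (exs xs \<theta>) \<or> sat M e (exs ys \<theta>')"
proof
  assume "sat M e (exs (xs@ys) \<chi>)"
  then obtain e' where e': "\<forall>v. v \<notin> set (xs@ys) \<longrightarrow> e' v = e v" "sat M e' \<theta> \<or> sat M e' \<theta>'"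
    unfolding sat_exs using c by blast
  define e1 where "e1 = (\<lambda>v. if v \<in> set xs then e' v else e v)"
  define e2 where "e2 = (\<lambda>v. if v \<in> set ys then e' v else e v)"
  have "sat M e1 \<theta> = sat M e' \<theta>" using e' d1 by (intro sat_cong) (auto simp: e1_def)
  moreover have "sat M e2 \<theta>' = sat M e' \<theta>'" using e' d2 by (intro sat_cong) (auto simp: e2_def)
  moreover have "\<forall>v. v \<notin> set xs \<longrightarrow> e1 v = e v" "\<forall>v. v \<notin> set ys \<longrightarrow> e2 v = e v"
    by (auto simp: e1_def e2_def)
  ultimately show "sat M e (exs xs \<theta>) \<or> sat M e (exs ys \<theta>')"
    unfolding sat_exs using e'(2) by blast
next
  assume "sat M e (exs xs \<theta>) \<or> sat M e (exs ys \<theta>')"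
  then show "sat M e (exs (xs@ys) \<chi>)"
  proof
    assume "sat M e (exs xs \<theta>)"
    then obtain e1 where "\<forall>v. v \<notin> set xs \<longrightarrow> e1 v = e v" "sat M e1 \<theta>" unfolding sat_exs by blast
    then have "(\<forall>v. v \<notin> set (xs@ys) \<longrightarrow> e1 v = e v) \<and> sat M e1 \<chi>" using c by simp
    then show ?thesis unfolding sat_exs by blast
  next
    assume "sat M e (exs ys \<theta>')"
    then obtain e1 where "\<forall>v. v \<notin> set ys \<longrightarrow> e1 v = e v" "sat M e1 \<theta>'" unfolding sat_exs by blast
    then have "(\<forall>v. v \<notin> set (xs@ys) \<longrightarrow> e1 v = e v) \<and> sat M e1 \<chi>" using c by simp
    then show ?thesis unfolding sat_exs by blast
  qed
qed

lemma all_conj: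
  assumes d1: "set ys \<inter> vars \<theta> = {}" and d2: "set xs \<inter> vars \<theta>' = {}"
    and c: "\<forall>e. sat M e \<chi> \<longleftrightarrow> sat M e \<theta> \<and> sat M e \<theta>'"
  shows "sat M e (alls (xs@ys) \<chi>) \<longleftrightarrow> sat M e (alls xs \<theta>) \<and> sat M e (alls ys \<theta>')"
proof
  assume "sat M e (alls (xs@ys) \<chi>)"
  then show "sat M e (alls xs \<theta>) \<and> sat M e (alls ys \<theta>')" unfolding sat_alls using c by auto
next
  assume "sat M e (alls xs \<theta>) \<and> sat M e (alls ys \<theta>')"
  then have h1: "\<And>e1. \<forall>v. v \<notin> set xs \<longrightarrow> e1 v = e v \<Longrightarrow> sat M e1 \<theta>"
    and h2: "\<And>e2. \<forall>v. v \<notin> set ys \<longrightarrow> e2 v = e v \<Longrightarrow> sat M e2 \<theta>'"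
    unfolding sat_alls by blast+
  show "sat M e (alls (xs@ys) \<chi>)" unfolding sat_alls
  proof (intro allI impI)
    fix e' assume e': "\<forall>v. v \<notin> set (xs@ys) \<longrightarrow> e' v = e v"
    define e1 where "e1 = (\<lambda>v. if v \<in> set xs then e' v else e v)"
    define e2 where "e2 = (\<lambda>v. if v \<in> set ys then e' v else e v)"
    have "sat M e1 \<theta> = sat M e' \<theta>" using e' d1 by (intro sat_cong) (auto simp: e1_def)
    moreover have "sat M e2 \<theta>' = sat M e' \<theta>'" using e' d2 by (intro sat_cong) (auto simp: e2_def)
    moreover have "sat M e1 \<theta>" by (rule h1) (auto simp: e1_def)
    moreover have "sat M e2 \<theta>'" by (rule h2) (auto simp: e2_def)
    ultimately show "sat M e' \<chi>" using c by simp
  qed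
qed

lemma all_disj:
  assumes d1: "set ys \<inter> vars \<theta> = {}" and d2: "set xs \<inter> vars \<theta>' = {}"
    and c: "\<forall>e. sat M e \<chi> \<longleftrightarrow> sat M e \<theta> \<or> sat M e \<theta>'"
  shows "sat M e (alls (xs@ys) \<chi>) \<longleftrightarrow> sat M e (alls xs \<theta>) \<or> sat M e (alls ys \<theta>')"
proof
  assume h: "sat M e (alls (xs@ys) \<chi>)"
  show "sat M e (alls xs \<theta>) \<or> sat M e (alls ys \<theta>')"
  proof (rule ccontr)
    assume "\<not> ?thesis"
    then obtain e1 e2 where e1: "\<forall>v. v \<notin> set xs \<longrightarrow> e1 v = e v" "\<not> sat M e1 \<theta>"
      and e2: "\<forall>v. v \<notin> set ys \<longrightarrow> e2 v = e v" "\<not> sat M e2 \<theta>'"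
      unfolding sat_alls by blast
    define e' where "e' = (\<lambda>v. if v \<in> set xs then e1 v else e2 v)"
    have "sat M e' \<theta> = sat M e1 \<theta>" using e1 e2 d1 by (intro sat_cong) (auto simp: e'_def)
    moreover have "sat M e' \<theta>' = sat M e2 \<theta>'" using e1 e2 d2 by (intro sat_cong) (auto simp: e'_def)
    moreover have "\<forall>v. v \<notin> set (xs@ys) \<longrightarrow> e' v = e v" using e1 e2 by (auto simp: e'_def)
    ultimately show False using h e1 e2 c unfolding sat_alls by blast
  qed
next
  assume "sat M e (alls xs \<theta>) \<or> sat M e (alls ys \<theta>')"
  then show "sat M e (alls (xs@ys) \<chi>)"
  proof
    assume h1: "sat M e (alls xs \<theta>)"
    show ?thesis unfolding sat_alls
    proof (intro allI impI)
      fix e' assume e': "\<forall>v. v \<notin> set (xs@ys) \<longrightarrow> e' v = e v"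
      define e1 where "e1 = (\<lambda>v. if v \<in> set xs then e' v else e v)"
      have "sat M e1 \<theta> = sat M e' \<theta>" using e' d1 by (intro sat_cong) (auto simp: e1_def)
      moreover have "sat M e1 \<theta>" using h1 unfolding sat_alls by (auto simp: e1_def)
      ultimately show "sat M e' \<chi>" using c by simp
    qed
  next
    assume h2: "sat M e (alls ys \<theta>')"
    show ?thesis unfolding sat_alls
    proof (intro allI impI)
      fix e' assume e': "\<forall>v. v \<notin> set (xs@ys) \<longrightarrow> e' v = e v"
      define e2 where "e2 = (\<lambda>v. if v \<in> set ys then e' v else e v)"
      have "sat M e2 \<theta>' = sat M e' \<theta>'" using e' d2 by (intro sat_cong) (auto simp: e2_def)
      moreover have "sat M e2 \<theta>'" using h2 unfolding sat_alls by (auto simp: e2_def)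
      ultimately show "sat M e' \<chi>" using c by simp
    qed
  qed
qed

definition sep :: "fm \<Rightarrow> fm \<Rightarrow> bool" where
  "sep \<phi> \<psi> \<longleftrightarrow> bvars \<phi> \<inter> vars \<psi> = {} \<and> bvars \<psi> \<inter> vars \<phi> = {}"

lemma prenex:
  "\<forall>\<phi> \<psi>. sep \<phi> \<psi> \<longrightarrow>
    (sigma n \<phi> \<longrightarrow> sigma n \<psi> \<longrightarrow>
      (\<exists>\<chi>. sigma n \<chi> \<and> (\<forall>e. sat M e \<chi> \<longleftrightarrow> sat M e \<phi> \<and> sat M e \<psi>)) \<and>
      (\<exists>\<chi>. sigma n \<chi> \<and> (\<forall>e. sat M e \<chi> \<longleftrightarrow> sat M e \<phi> \<or> sat M e \<psi>))) \<and>
    (pi n \<phi> \<longrightarrow> pi n \<psi> \<longrightarrow>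
      (\<exists>\<chi>. pi n \<chi> \<and> (\<forall>e. sat M e \<chi> \<longleftrightarrow> sat M e \<phi> \<and> sat M e \<psi>)) \<and>
      (\<exists>\<chi>. pi n \<chi> \<and> (\<forall>e. sat M e \<chi> \<longleftrightarrow> sat M e \<phi> \<or> sat M e \<psi>)))"
proof (induct n)
  case 0
  show ?case
  proof (intro allI impI conjI)
    fix \<phi> \<psi>
    assume "sigma 0 \<phi>" "sigma 0 \<psi>"
    then have d: "delta0 \<phi>" "delta0 \<psi>" by (auto intro: sigma0_delta0)
    show "\<exists>\<chi>. sigma 0 \<chi> \<and> (\<forall>e. sat M e \<chi> \<longleftrightarrow> sat M e \<phi> \<and> sat M e \<psi>)"
      by (rule exI[of _ "Conj \<phi> \<psi>"]) (auto intro: sigma_pi.intros delta0.intros d)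
    show "\<exists>\<chi>. sigma 0 \<chi> \<and> (\<forall>e. sat M e \<chi> \<longleftrightarrow> sat M e \<phi> \<or> sat M e \<psi>)"
      by (rule exI[of _ "Disj \<phi> \<psi>"]) (auto intro: sigma_pi.intros delta0_Disj d)
  next
    fix \<phi> \<psi>
    assume "pi 0 \<phi>" "pi 0 \<psi>"
    then have d: "delta0 \<phi>" "delta0 \<psi>" by (auto intro: pi0_delta0)
    show "\<exists>\<chi>. pi 0 \<chi> \<and> (\<forall>e. sat M e \<chi> \<longleftrightarrow> sat M e \<phi> \<and> sat M e \<psi>)"
      by (rule exI[of _ "Conj \<phi> \<psi>"]) (auto intro: sigma_pi.intros delta0.intros d)
    show "\<exists>\<chi>. pi 0 \<chi> \<and> (\<forall>e. sat M e \<chi> \<longleftrightarrow> sat M e \<phi> \<or> sat M e \<psi>)"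
      by (rule exI[of _ "Disj \<phi> \<psi>"]) (auto intro: sigma_pi.intros delta0_Disj d)
  qed
next
  case (Suc m)
  show ?case
  proof (intro allI impI conjI)
    fix \<phi> \<psi>
    assume s: "sep \<phi> \<psi>" "sigma (Suc m) \<phi>" "sigma (Suc m) \<psi>"
    obtain xs \<theta> where 1: "\<phi> = exs xs \<theta>" "pi m \<theta>" using sigmaSuc_nf s by blast
    obtain ys \<theta>' where 2: "\<psi> = exs ys \<theta>'" "pi m \<theta>'" using sigmaSuc_nf s by blast
    have sp: "sep \<theta> \<theta>'" and d1: "set ys \<inter> vars \<theta> = {}" and d2: "set xs \<inter> vars \<theta>' = {}"
      using s(1) 1 2 by (auto simp: sep_def)
    obtain \<chi> where c: "pi m \<chi>" "\<forall>e. sat M e \<chi> \<longleftrightarrow> sat M e \<theta> \<and> sat M e \<theta>'"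
      using Suc sp 1 2 by blast
    obtain \<chi>' where c': "pi m \<chi>'" "\<forall>e. sat M e \<chi>' \<longleftrightarrow> sat M e \<theta> \<or> sat M e \<theta>'"
      using Suc sp 1 2 by blast
    show "\<exists>\<chi>. sigma (Suc m) \<chi> \<and> (\<forall>e. sat M e \<chi> \<longleftrightarrow> sat M e \<phi> \<and> sat M e \<psi>)"
      using ex_conj[OF d1 d2 c(2)] exs_sigma[OF c(1)] 1 2 by blast
    show "\<exists>\<chi>. sigma (Suc m) \<chi> \<and> (\<forall>e. sat M e \<chi> \<longleftrightarrow> sat M e \<phi> \<or> sat M e \<psi>)"
      using ex_disj[OF d1 d2 c'(2)] exs_sigma[OF c'(1)] 1 2 by blast
  next
    fix \<phi> \<psi>
    assume s: "sep \<phi> \<psi>" "pi (Suc m) \<phi>" "pi (Suc m) \<psi>"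
    obtain xs \<theta> where 1: "\<phi> = alls xs \<theta>" "sigma m \<theta>" using piSuc_nf s by blast
    obtain ys \<theta>' where 2: "\<psi> = alls ys \<theta>'" "sigma m \<theta>'" using piSuc_nf s by blast
    have sp: "sep \<theta> \<theta>'" and d1: "set ys \<inter> vars \<theta> = {}" and d2: "set xs \<inter> vars \<theta>' = {}"
      using s(1) 1 2 by (auto simp: sep_def)
    obtain \<chi> where c: "sigma m \<chi>" "\<forall>e. sat M e \<chi> \<longleftrightarrow> sat M e \<theta> \<and> sat M e \<theta>'"
      using Suc sp 1 2 by blast
    obtain \<chi>' where c': "sigma m \<chi>'" "\<forall>e. sat M e \<chi>' \<longleftrightarrow> sat M e \<theta> \<or> sat M e \<theta>'"
      using Suc sp 1 2 by blast
    show "\<exists>\<chi>. pi (Suc m) \<chi> \<and> (\<forall>e. sat M e \<chi> \<longleftrightarrow> sat M e \<phi> \<and> sat M e \<psi>)"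
      using all_conj[OF d1 d2 c(2)] alls_pi[OF c(1)] 1 2 by blast
    show "\<exists>\<chi>. pi (Suc m) \<chi> \<and> (\<forall>e. sat M e \<chi> \<longleftrightarrow> sat M e \<phi> \<or> sat M e \<psi>)"
      using all_disj[OF d1 d2 c'(2)] alls_pi[OF c'(1)] 1 2 by blast
  qed
qed

lemma prenex_conj: "sep \<phi> \<psi> \<Longrightarrow> sigma n \<phi> \<Longrightarrow> sigma n \<psi> \<Longrightarrow>
   \<exists>\<chi>. sigma n \<chi> \<and> (\<forall>e. sat M e \<chi> \<longleftrightarrow> sat M e \<phi> \<and> sat M e \<psi>)"
  using prenex by blast
lemma prenex_disj: "sep \<phi> \<psi> \<Longrightarrow> sigma n \<phi> \<Longrightarrow> sigma n \<psi> \<Longrightarrow>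
   \<exists>\<chi>. sigma n \<chi> \<and> (\<forall>e. sat M e \<chi> \<longleftrightarrow> sat M e \<phi> \<or> sat M e \<psi>)"
  using prenex by blast




fun ttr :: "(nat \<Rightarrow> nat) \<Rightarrow> (nat \<Rightarrow> nat) \<Rightarrow> nat set \<Rightarrow> trm \<Rightarrow> trm" where
  "ttr f g B (Var x) = Var (if x \<in> B then g x else f x)"
| "ttr f g B Zero = Zero"
| "ttr f g B (Succ t) = Succ (ttr f g B t)"
| "ttr f g B (Plus s t) = Plus (ttr f g B s) (ttr f g B t)"
| "ttr f g B (Times s t) = Times (ttr f g B s) (ttr f g B t)"

fun ftr :: "(nat \<Rightarrow> nat) \<Rightarrow> (nat \<Rightarrow> nat) \<Rightarrow> nat set \<Rightarrow> fm \<Rightarrow> fm" where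
  "ftr f g B (Eq s t) = Eq (ttr f g B s) (ttr f g B t)"
| "ftr f g B (Lt s t) = Lt (ttr f g B s) (ttr f g B t)"
| "ftr f g B (Neg \<phi>) = Neg (ftr f g B \<phi>)"
| "ftr f g B (Conj \<phi> \<psi>) = Conj (ftr f g B \<phi>) (ftr f g B \<psi>)"
| "ftr f g B (fm.Ex x \<phi>) = fm.Ex (g x) (ftr f g (insert x B) \<phi>)"

lemma teval_ttr: "teval M e (ttr f g B t) = teval M (\<lambda>x. if x \<in> B then e (g x) else e (f x)) t"
  by (induct t) auto

lemma sat_ftr:
  assumes "inj g" "\<And>a b. f a \<noteq> g b"
  shows "sat M e (ftr f g B \<phi>) = sat M (\<lambda>x. if x \<in> B then e (g x) else e (f x)) \<phi>"
proof (induct \<phi> arbitrary: e B)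
  case (Ex x \<phi>)
  have "\<And>u. (\<lambda>z. if z \<in> insert x B then (e(g x := u)) (g z) else (e(g x := u)) (f z))
        = (\<lambda>z. if z \<in> B then e (g z) else e (f z))(x := u)"
    using assms by (auto simp: inj_eq fun_eq_iff)
  then show ?case using Ex by simp
qed (auto simp: teval_ttr)

lemma tvars_ttr: "tvars (ttr f g B t) = (\<lambda>x. if x \<in> B then g x else f x) ` tvars t"
  by (induct t) auto

lemma delta0_ftr:
  assumes "inj g" "\<And>a b. f a \<noteq> g b"
  shows "delta0 \<phi> \<Longrightarrow> delta0 (ftr f g B \<phi>)"
proof (induct \<phi> arbitrary: B rule: delta0.induct)
  case (5 x t \<phi>)
  have "g x \<notin> tvars (ttr f g (insert x B) t)"
    using 5(1) assms(1) assms(2)[THEN not_sym] by (auto simp: tvars_ttr inj_eq split: if_splits)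
  then show ?case using 5 by (auto intro: delta0.intros)
qed (auto intro: delta0.intros)

lemma ftr_All: "ftr f g B (Defs.All x \<phi>) = Defs.All (g x) (ftr f g (insert x B) \<phi>)"
  by (simp add: All_def)

lemma sigma_ftr:
  assumes "inj g" "\<And>a b. f a \<noteq> g b"
  shows "sigma n \<phi> \<Longrightarrow> sigma n (ftr f g B \<phi>)" and "pi n' \<phi>' \<Longrightarrow> pi n' (ftr f g B' \<phi>')"
proof (induct arbitrary: B and B' rule: sigma_pi.inducts)
  case (6 n \<phi> x)
  then show ?case by (simp add: ftr_All sigma_pi.intros)
qed (auto intro: sigma_pi.intros delta0_ftr[OF assms])

lemma tvars_ttr_sub: "tvars (ttr f g B t) \<subseteq> range f \<union> range g"
  by (induct t) auto

lemma vars_ftr: "vars (ftr f g B \<phi>) \<subseteq> range f \<union> range g"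
  by (induct \<phi> arbitrary: B) (auto simp: tvars_ttr)

lemma bvars_ftr: "bvars (ftr f g B \<phi>) \<subseteq> range g"
  by (induct \<phi> arbitrary: B) auto

section \<open>Sigma_n definable predicates on glue environments\<close>

definition mrg :: "(nat \<Rightarrow> 'a) \<Rightarrow> (nat \<Rightarrow> 'a) \<Rightarrow> nat \<Rightarrow> 'a" where
  "mrg E p k = (if k < 100 then E k else p k)"

definition SD :: "nat \<Rightarrow> 'a struc \<Rightarrow> ((nat \<Rightarrow> 'a) \<Rightarrow> bool) \<Rightarrow> bool" where
  "SD n M P \<longleftrightarrow> (\<exists>\<phi> p. sigma n \<phi> \<and> (\<forall>E. P E \<longleftrightarrow> sat M (mrg E p) \<phi>))"

lemma SD_delta0: "delta0 \<phi> \<Longrightarrow> (\<And>E. P E \<longleftrightarrow> sat M (mrg E p) \<phi>) \<Longrightarrow> SD n M P"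
  unfolding SD_def by (blast intro: sigma_pi.intros)

lemma SD_cong: "SD n M P \<Longrightarrow> (\<And>E. P E \<longleftrightarrow> Q E) \<Longrightarrow> SD n M Q"
  unfolding SD_def by metis

definition f1 :: "nat \<Rightarrow> nat" where "f1 k = (if k < 100 then k else 4*k)"
definition g1 :: "nat \<Rightarrow> nat" where "g1 k = 4*k+401"
definition f2 :: "nat \<Rightarrow> nat" where "f2 k = (if k < 100 then k else 4*k+2)"
definition g2 :: "nat \<Rightarrow> nat" where "g2 k = 4*k+403"

lemma inj_g1: "inj g1" by (auto simp: inj_def g1_def)
lemma inj_g2: "inj g2" by (auto simp: inj_def g2_def)
lemma m4: "(4*a + r = 4*b + s) \<Longrightarrow> r < 4 \<Longrightarrow> s < 4 \<Longrightarrow> r = (s::nat)"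
  by (metis add.commute mod_mult_self2 mod_less)
lemma f1g1: "f1 a \<noteq> g1 b" unfolding f1_def g1_def using m4[of a 0 "b+100" 1] by auto
lemma f2g2: "f2 a \<noteq> g2 b" unfolding f2_def g2_def using m4[of a 2 "b+100" 3] by auto
lemma g1f2: "g1 a \<noteq> f2 b" unfolding f2_def g1_def using m4[of "a+100" 1 b 2] by auto
lemma g1g2: "g1 a \<noteq> g2 b" unfolding g2_def g1_def using m4[of "a+100" 1 "b+100" 3] by auto
lemma g2f1: "g2 a \<noteq> f1 b" unfolding f1_def g2_def using m4[of "a+100" 3 b 0] by auto

lemma ar4: "(4*x+2) mod 4 = (2::nat)" "(4*x+2) div 4 = (x::nat)" "(4*x) mod 4 = (0::nat)"
  "(4*x) div 4 = (x::nat)" "(4*x = (402::nat)) = False"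
  "Suc (Suc (4*x)) mod 4 = 2" "Suc (Suc (4*x)) div 4 = x" "(2*x = (201::nat)) = False"
  by presburger+

lemma SD_binop:
  assumes "SD n M P" "SD n M Q"
  shows "SD n M (\<lambda>E. P E \<and> Q E) \<and> SD n M (\<lambda>E. P E \<or> Q E)"
proof -
  obtain \<phi>1 p1 where 1: "sigma n \<phi>1" "\<forall>E. P E \<longleftrightarrow> sat M (mrg E p1) \<phi>1"
    using assms(1) unfolding SD_def by blast
  obtain \<phi>2 p2 where 2: "sigma n \<phi>2" "\<forall>E. Q E \<longleftrightarrow> sat M (mrg E p2) \<phi>2"
    using assms(2) unfolding SD_def by blast
  define \<psi>1 where "\<psi>1 = ftr f1 g1 {} \<phi>1"
  define \<psi>2 where "\<psi>2 = ftr f2 g2 {} \<phi>2"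
  define p where "p = (\<lambda>k. if k mod 4 = 0 then p1 (k div 4) else p2 (k div 4))"
  have s1: "sigma n \<psi>1" unfolding \<psi>1_def by (rule sigma_ftr(1)[OF inj_g1 f1g1 1(1)])
  have s2: "sigma n \<psi>2" unfolding \<psi>2_def by (rule sigma_ftr(1)[OF inj_g2 f2g2 2(1)])
  have e1: "sat M (mrg E p) \<psi>1 \<longleftrightarrow> P E" for E
  proof -
    have "mrg E p (f1 x) = mrg E p1 x" for x
    proof (cases "x < 100")
      case True then show ?thesis by (simp add: mrg_def f1_def)
    next
      case False then show ?thesis by (simp add: mrg_def f1_def p_def ar4)
    qed
    then have "(\<lambda>x. if x \<in> {} then mrg E p (g1 x) else mrg E p (f1 x)) = mrg E p1"
      by auto
    then show ?thesis unfolding \<psi>1_def sat_ftr[OF inj_g1 f1g1] using 1 by simp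
  qed
  have e2: "sat M (mrg E p) \<psi>2 \<longleftrightarrow> Q E" for E
  proof -
    have "mrg E p (f2 x) = mrg E p2 x" for x
    proof (cases "x < 100")
      case True then show ?thesis by (simp add: mrg_def f2_def)
    next
      case False then show ?thesis by (simp add: mrg_def f2_def p_def ar4)
    qed
    then have "(\<lambda>x. if x \<in> {} then mrg E p (g2 x) else mrg E p (f2 x)) = mrg E p2"
      by auto
    then show ?thesis unfolding \<psi>2_def sat_ftr[OF inj_g2 f2g2] using 2 by simp
  qed
  have sp: "sep \<psi>1 \<psi>2"
  proof -
    have r1: "range g1 \<inter> (range f2 \<union> range g2) = {}" using g1f2 g1g2 by auto
    have r2: "range g2 \<inter> (range f1 \<union> range g1) = {}" using g2f1 g1g2 by (auto simp: eq_commute)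
    have "bvars \<psi>1 \<inter> vars \<psi>2 = {}"
      using bvars_ftr[of f1 g1 "{}" \<phi>1] vars_ftr[of f2 g2 "{}" \<phi>2] r1
      unfolding \<psi>1_def \<psi>2_def by blast
    moreover have "bvars \<psi>2 \<inter> vars \<psi>1 = {}"
      using bvars_ftr[of f2 g2 "{}" \<phi>2] vars_ftr[of f1 g1 "{}" \<phi>1] r2
      unfolding \<psi>1_def \<psi>2_def by blast
    ultimately show ?thesis by (simp add: sep_def)
  qed
  obtain \<chi> where c: "sigma n \<chi>" "\<forall>e. sat M e \<chi> \<longleftrightarrow> sat M e \<psi>1 \<and> sat M e \<psi>2"
    using prenex_conj[OF sp s1 s2] by blast
  obtain \<chi>' where d: "sigma n \<chi>'" "\<forall>e. sat M e \<chi>' \<longleftrightarrow> sat M e \<psi>1 \<or> sat M e \<psi>2"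
    using prenex_disj[OF sp s1 s2] by blast
  have "SD n M (\<lambda>E. P E \<and> Q E)" unfolding SD_def
    using c e1 e2 by (intro exI[of _ \<chi>] exI[of _ p]) auto
  moreover have "SD n M (\<lambda>E. P E \<or> Q E)" unfolding SD_def
    using d e1 e2 by (intro exI[of _ \<chi>'] exI[of _ p]) auto
  ultimately show ?thesis by blast
qed

lemma SD_conj: "SD n M P \<Longrightarrow> SD n M Q \<Longrightarrow> SD n M (\<lambda>E. P E \<and> Q E)"
  using SD_binop by blast
lemma SD_disj: "SD n M P \<Longrightarrow> SD n M Q \<Longrightarrow> SD n M (\<lambda>E. P E \<or> Q E)"
  using SD_binop by blast

lemma SD_bex:
  assumes "SD n M P" "i < 100"
  shows "SD n M (\<lambda>E. \<exists>u. lss M u c \<and> P (E(i:=u)))"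
proof -
  obtain \<phi>1 p1 where 1: "sigma n \<phi>1" "\<forall>E. P E \<longleftrightarrow> sat M (mrg E p1) \<phi>1"
    using assms(1) unfolding SD_def by blast
  define \<psi>1 where "\<psi>1 = ftr f1 g1 {} \<phi>1"
  define p where "p = (\<lambda>k. if k = 402 then c else p1 (k div 4))"
  have s1: "sigma n \<psi>1" unfolding \<psi>1_def by (rule sigma_ftr(1)[OF inj_g1 f1g1 1(1)])
  have e1: "sat M (mrg E p) \<psi>1 \<longleftrightarrow> P E" for E
  proof -
    have "mrg E p (f1 x) = mrg E p1 x" for x
    proof (cases "x < 100")
      case True then show ?thesis by (simp add: mrg_def f1_def)
    next
      case False then show ?thesis by (simp add: mrg_def f1_def p_def ar4)
    qed
    then have "(\<lambda>x. if x \<in> {} then mrg E p (g1 x) else mrg E p (f1 x)) = mrg E p1"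
      by auto
    then show ?thesis unfolding \<psi>1_def sat_ftr[OF inj_g1 f1g1] using 1 by simp
  qed
  have upd: "(mrg E p)(i := u) = mrg (E(i:=u)) p" for E u
    using assms(2) by (auto simp: fun_eq_iff mrg_def)
  have c402: "mrg E p 402 = c" for E by (simp add: mrg_def p_def)
  define \<delta> where "\<delta> = Lt (Var i) (Var 402)"
  have dl: "sat M (mrg E' p) \<delta> = lss M (E' i) c" for E'
    using assms(2) c402 by (simp add: \<delta>_def mrg_def)
  have sem: "sat M (mrg E p) (fm.Ex i \<chi>) \<longleftrightarrow> (\<exists>u. lss M u c \<and> P (E(i:=u)))"
    if "\<forall>e. sat M e \<chi> \<longleftrightarrow> sat M e \<psi>1 \<and> sat M e \<delta>" for E \<chi>
  proof -
    have "sat M (mrg E p) (fm.Ex i \<chi>) = (\<exists>u. sat M (mrg (E(i:=u)) p) \<psi>1 \<and> sat M (mrg (E(i:=u)) p) \<delta>)"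
      using that upd by simp
    then show ?thesis using dl e1 by auto
  qed
  show ?thesis
  proof (cases n)
    case 0
    have "delta0 \<psi>1" using s1 0 sigma0_delta0 by simp
    then have "delta0 (fm.Ex i (Conj \<delta> \<psi>1))" unfolding \<delta>_def
      using assms(2) by (intro delta0.intros) auto
    moreover have "sat M (mrg E p) (fm.Ex i (Conj \<delta> \<psi>1)) \<longleftrightarrow> (\<exists>u. lss M u c \<and> P (E(i:=u)))" for E
      using sem[of "Conj \<delta> \<psi>1" E] by auto
    ultimately show ?thesis unfolding SD_def by (blast intro: sigma_pi.intros)
  next
    case (Suc m)
    have sp: "sep \<psi>1 \<delta>"
      using bvars_ftr[of f1 g1 "{}" \<phi>1] assms(2) unfolding sep_def \<delta>_def \<psi>1_def g1_def by auto
    have "sigma n \<delta>" unfolding \<delta>_def by (auto intro: sigma_pi.intros delta0.intros)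
    then obtain \<chi> where c: "sigma n \<chi>" "\<forall>e. sat M e \<chi> \<longleftrightarrow> sat M e \<psi>1 \<and> sat M e \<delta>"
      using prenex_conj[OF sp s1] by blast
    have "sigma n (fm.Ex i \<chi>)" using c(1) Suc by (auto intro: sigma_pi.intros)
    then show ?thesis unfolding SD_def using sem[OF c(2)] by blast
  qed
qed




locale IDM =
  fixes M :: "'a struc"
  assumes model: "IDelta0_model M"
begin

abbreviation Zr where "Zr \<equiv> zer M"
abbreviation Sc where "Sc \<equiv> suc M"
abbreviation add (infixl "\<oplus>" 65) where "x \<oplus> y \<equiv> pls M x y"
abbreviation mul (infixl "\<otimes>" 70) where "x \<otimes> y \<equiv> tms M x y"
abbreviation less (infix "\<prec>" 50) where "x \<prec> y \<equiv> lss M x y"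

lemma S_neq_Z: "Sc x \<noteq> Zr" using model unfolding IDelta0_model_def by blast
lemma S_inj: "Sc x = Sc y \<Longrightarrow> x = y" using model unfolding IDelta0_model_def by blast
lemma add_Z: "x \<oplus> Zr = x" using model unfolding IDelta0_model_def by blast
lemma add_S: "x \<oplus> Sc y = Sc (x \<oplus> y)" using model unfolding IDelta0_model_def by blast
lemma mul_Z: "x \<otimes> Zr = Zr" using model unfolding IDelta0_model_def by blast
lemma mul_S: "x \<otimes> Sc y = x \<otimes> y \<oplus> x" using model unfolding IDelta0_model_def by blast
lemma less_def: "x \<prec> y \<longleftrightarrow> (\<exists>z. x \<oplus> Sc z = y)" using model unfolding IDelta0_model_def by blast

lemma ind:
  assumes "delta0 \<phi>" "\<And>u. P u \<longleftrightarrow> sat M (e(v:=u)) \<phi>" "P Zr" "\<And>u. P u \<Longrightarrow> P (Sc u)"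
  shows "P u"
proof -
  have H: "\<forall>\<phi> v e. delta0 \<phi> \<longrightarrow> sat M (e(v := Zr)) \<phi> \<longrightarrow>
        (\<forall>u. sat M (e(v := u)) \<phi> \<longrightarrow> sat M (e(v := Sc u)) \<phi>) \<longrightarrow> (\<forall>u. sat M (e(v := u)) \<phi>)"
    using model unfolding IDelta0_model_def by blast
  have "\<forall>u. sat M (e(v := u)) \<phi>"
    using H assms by metis
  then show ?thesis using assms(2) by blast
qed

lemma S_self: "x \<prec> Sc x"
  unfolding less_def by (rule exI[of _ Zr]) (simp add: add_S add_Z)

lemma S_self2: "x \<prec> Sc (Sc x)"
  unfolding less_def by (rule exI[of _ "Sc Zr"]) (simp add: add_S add_Z)

lemma Z_or_S: "x = Zr \<or> (\<exists>y. x = Sc y)"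
proof -
  have "x = Zr \<or> (\<exists>w. w \<prec> Sc x \<and> x = Sc w)"
  proof (rule ind[where P="\<lambda>u. u = Zr \<or> (\<exists>w. w \<prec> Sc u \<and> u = Sc w)"
      and \<phi>="Disj (Eq (Var 0) Zero) (fm.Ex 1 (Conj (Lt (Var 1) (Succ (Var 0))) (Eq (Var 0) (Succ (Var 1)))))"
      and e="\<lambda>_. Zr" and v=0])
    show "delta0 (Disj (Eq (Var 0) Zero) (fm.Ex 1 (Conj (Lt (Var 1) (Succ (Var 0))) (Eq (Var 0) (Succ (Var 1))))))"
      unfolding Disj_def by (intro delta0.intros) auto
  qed (use S_self2 in auto)
  then show ?thesis by auto
qed

lemma Z_add: "Zr \<oplus> x = x"
  by (rule ind[where P="\<lambda>u. Zr \<oplus> u = u" and \<phi>="Eq (Plus Zero (Var 0)) (Var 0)" and e="\<lambda>_. Zr" and v=0])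
     (auto intro: delta0.intros simp: add_Z add_S)

lemma S_add: "Sc x \<oplus> y = Sc (x \<oplus> y)"
  by (rule ind[where P="\<lambda>u. Sc x \<oplus> u = Sc (x \<oplus> u)"
        and \<phi>="Eq (Plus (Succ (Var 1)) (Var 0)) (Succ (Plus (Var 1) (Var 0)))" and e="(\<lambda>_. Zr)(1:=x)" and v=0])
     (auto intro: delta0.intros simp: add_Z add_S)

lemma add_comm: "x \<oplus> y = y \<oplus> x"
  by (rule ind[where P="\<lambda>u. x \<oplus> u = u \<oplus> x"
        and \<phi>="Eq (Plus (Var 1) (Var 0)) (Plus (Var 0) (Var 1))" and e="(\<lambda>_. Zr)(1:=x)" and v=0])
     (auto intro: delta0.intros simp: add_Z add_S S_add Z_add)

lemma add_assoc: "x \<oplus> y \<oplus> z = x \<oplus> (y \<oplus> z)"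
  by (rule ind[where P="\<lambda>u. x \<oplus> y \<oplus> u = x \<oplus> (y \<oplus> u)"
        and \<phi>="Eq (Plus (Plus (Var 1) (Var 2)) (Var 0)) (Plus (Var 1) (Plus (Var 2) (Var 0)))"
        and e="(\<lambda>_. Zr)(1:=x, 2:=y)" and v=0])
     (auto intro: delta0.intros simp: add_Z add_S)

lemma add_lcomm: "x \<oplus> (y \<oplus> z) = y \<oplus> (x \<oplus> z)"
  by (metis add_assoc add_comm)

lemmas add_ac = add_assoc add_comm add_lcomm

lemma add_right_cancel: "x \<oplus> z = y \<oplus> z \<Longrightarrow> x = y"
proof -
  have "x \<oplus> z = y \<oplus> z \<longrightarrow> x = y"
    by (rule ind[where P="\<lambda>u. x \<oplus> u = y \<oplus> u \<longrightarrow> x = y"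
        and \<phi>="Disj (Neg (Eq (Plus (Var 1) (Var 0)) (Plus (Var 2) (Var 0)))) (Eq (Var 1) (Var 2))"
        and e="(\<lambda>_. Zr)(1:=x, 2:=y)" and v=0])
       (auto intro!: delta0_Disj delta0.intros simp: add_Z add_S dest: S_inj)
  then show "x \<oplus> z = y \<oplus> z \<Longrightarrow> x = y" by blast
qed

lemma add_left_cancel: "z \<oplus> x = z \<oplus> y \<Longrightarrow> x = y"
  using add_right_cancel add_comm by metis

lemma add_eq_self: "x \<oplus> y = x \<longleftrightarrow> y = Zr"
  using add_left_cancel[of x y Zr] add_Z by auto

lemma not_less_Z: "\<not> x \<prec> Zr"
  unfolding less_def by (simp add: add_S S_neq_Z)

lemma less_irrefl: "\<not> x \<prec> x"
  unfolding less_def by (simp add: add_eq_self S_neq_Z)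

lemma add_less_self: "\<not> x \<oplus> t \<prec> x"
proof
  assume "x \<oplus> t \<prec> x"
  then obtain z where "x \<oplus> t \<oplus> Sc z = x" unfolding less_def by blast
  then have "x \<oplus> Sc (t \<oplus> z) = x" by (simp add: add_assoc add_S)
  then show False by (simp add: add_eq_self S_neq_Z)
qed

lemma less_trans: "x \<prec> y \<Longrightarrow> y \<prec> w \<Longrightarrow> x \<prec> w"
proof -
  assume "x \<prec> y" "y \<prec> w"
  then obtain z z' where "x \<oplus> Sc z = y" "y \<oplus> Sc z' = w" unfolding less_def by blast
  then have "x \<oplus> Sc (Sc z \<oplus> z') = w" by (metis add_assoc add_S)
  then show "x \<prec> w" unfolding less_def by blast
qed

lemma less_S_iff: "x \<prec> Sc y \<longleftrightarrow> x \<prec> y \<or> x = y"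
proof
  assume "x \<prec> Sc y"
  then obtain z where "x \<oplus> Sc z = Sc y" unfolding less_def by blast
  then have h: "x \<oplus> z = y" by (simp add: add_S S_inj)
  show "x \<prec> y \<or> x = y"
    using Z_or_S[of z] h add_Z unfolding less_def by auto
next
  assume "x \<prec> y \<or> x = y"
  then show "x \<prec> Sc y"
  proof
    assume "x \<prec> y"
    then obtain z where "x \<oplus> Sc z = y" unfolding less_def by blast
    then have "x \<oplus> Sc (Sc z) = Sc y" by (simp add: add_S)
    then show ?thesis unfolding less_def by blast
  qed (use S_self in blast)
qed

lemma less_imp_S_le: "x \<prec> y \<Longrightarrow> Sc x \<prec> y \<or> Sc x = y"
proof -
  assume "x \<prec> y"
  then obtain z where h: "x \<oplus> Sc z = y" unfolding less_def by blast
  show ?thesis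
  proof (cases "z = Zr")
    case True then show ?thesis using h by (simp add: add_S add_Z)
  next
    case False
    then obtain z' where "z = Sc z'" using Z_or_S by blast
    then have "Sc x \<oplus> Sc z' = y" using h by (simp add: S_add add_S)
    then show ?thesis unfolding less_def by blast
  qed
qed

lemma S_mono: "x \<prec> y \<Longrightarrow> Sc x \<prec> Sc y"
  unfolding less_def by (auto simp: S_add)

lemma Z_less: "x \<noteq> Zr \<Longrightarrow> Zr \<prec> x"
  using Z_or_S[of x] unfolding less_def by (auto simp: Z_add)

lemma trichotomy: "x \<prec> y \<or> x = y \<or> y \<prec> x"
proof (rule ind[where P="\<lambda>u. x \<prec> u \<or> x = u \<or> u \<prec> x"
      and \<phi>="Disj (Lt (Var 1) (Var 0)) (Disj (Eq (Var 1) (Var 0)) (Lt (Var 0) (Var 1)))"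
      and e="(\<lambda>_. Zr)(1:=x)" and v=0])
  show "delta0 (Disj (Lt (Var 1) (Var 0)) (Disj (Eq (Var 1) (Var 0)) (Lt (Var 0) (Var 1))))"
    by (intro delta0_Disj delta0.intros)
  show "x \<prec> Zr \<or> x = Zr \<or> Zr \<prec> x" using Z_less by blast
  fix u assume "x \<prec> u \<or> x = u \<or> u \<prec> x"
  then show "x \<prec> Sc u \<or> x = Sc u \<or> Sc u \<prec> x"
    using less_S_iff less_imp_S_le by blast
qed simp

lemma less_asym: "x \<prec> y \<Longrightarrow> \<not> y \<prec> x"
  using less_trans less_irrefl by blast

lemma add_less_mono: "x \<prec> y \<Longrightarrow> x \<oplus> c \<prec> y \<oplus> c"
  unfolding less_def by (metis add_ac)

lemma add_less_mono_left: "x \<prec> y \<Longrightarrow> c \<oplus> x \<prec> c \<oplus> y"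
  using add_less_mono add_comm by metis

lemma less_add_cancel_left: "c \<oplus> x \<prec> c \<oplus> y \<Longrightarrow> x \<prec> y"
  using trichotomy[of x y] add_less_mono_left less_asym less_irrefl by metis

lemma le_add_less: "x \<prec> x \<oplus> t \<or> t = Zr"
  using Z_or_S[of t] unfolding less_def by auto

lemma less_add_nonZ: "t \<noteq> Zr \<Longrightarrow> x \<prec> x \<oplus> t"
  using le_add_less by blast

lemma add_eq_Z: "x \<oplus> y = Zr \<Longrightarrow> y = Zr"
  using Z_or_S[of y] by (auto simp: add_S S_neq_Z)

lemma less_le_trans: "x \<prec> y \<Longrightarrow> y \<prec> w \<or> y = w \<Longrightarrow> x \<prec> w"
  using less_trans by blast

lemma distrib: "x \<otimes> (y \<oplus> z) = x \<otimes> y \<oplus> x \<otimes> z"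
  by (rule ind[where P="\<lambda>u. x \<otimes> (y \<oplus> u) = x \<otimes> y \<oplus> x \<otimes> u"
        and \<phi>="Eq (Times (Var 1) (Plus (Var 2) (Var 0))) (Plus (Times (Var 1) (Var 2)) (Times (Var 1) (Var 0)))"
        and e="(\<lambda>_. Zr)(1:=x, 2:=y)" and v=0])
     (auto intro: delta0.intros simp: add_Z add_S mul_Z mul_S add_assoc)

lemma mul_S_le: "Sc q \<prec> b \<or> Sc q = b \<Longrightarrow> b \<noteq> Zr \<Longrightarrow> b \<otimes> Sc q \<prec> b \<otimes> b \<or> b \<otimes> Sc q = b \<otimes> b"
proof -
  assume h: "Sc q \<prec> b \<or> Sc q = b" and b: "b \<noteq> Zr"
  show ?thesis
  proof (cases "Sc q = b")
    case True then show ?thesis by simp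
  next
    case False
    then obtain d where d: "Sc q \<oplus> Sc d = b" using h unfolding less_def by blast
    have "b \<otimes> b = b \<otimes> Sc q \<oplus> (b \<otimes> d \<oplus> b)" using d[symmetric] distrib mul_S
      by metis
    moreover have "b \<otimes> d \<oplus> b \<noteq> Zr" using add_eq_Z b by blast
    ultimately show ?thesis using less_add_nonZ by metis
  qed
qed

lemma range_lemma: "q \<prec> b \<Longrightarrow> r \<prec> b \<Longrightarrow> b \<otimes> q \<oplus> r \<prec> b \<otimes> b"
proof -
  assume q: "q \<prec> b" and r: "r \<prec> b"
  have b: "b \<noteq> Zr" using r not_less_Z by blast
  have "b \<otimes> q \<oplus> r \<prec> b \<otimes> q \<oplus> b" using add_less_mono_left r by blast
  also have "b \<otimes> q \<oplus> b = b \<otimes> Sc q" by (simp add: mul_S)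
  finally have 1: "b \<otimes> q \<oplus> r \<prec> b \<otimes> Sc q" .
  show ?thesis using mul_S_le[OF less_imp_S_le[OF q] b] 1 less_trans by metis
qed

lemma uniq_lemma:
  assumes "w1 \<prec> w1'" "w2 \<prec> a"
  shows "a \<otimes> w1 \<oplus> w2 \<noteq> a \<otimes> w1' \<oplus> w2'"
proof
  assume eq: "a \<otimes> w1 \<oplus> w2 = a \<otimes> w1' \<oplus> w2'"
  obtain d where d: "w1 \<oplus> Sc d = w1'" using assms(1) unfolding less_def by blast
  have "a \<otimes> w1' \<oplus> w2' = a \<otimes> w1 \<oplus> (a \<oplus> (a \<otimes> d \<oplus> w2'))"
    using d[symmetric] by (simp add: distrib mul_S add_ac)
  then have "w2 = a \<oplus> (a \<otimes> d \<oplus> w2')" using eq add_left_cancel by metis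
  then show False using assms(2) add_less_self by metis
qed

lemma uniq:
  assumes "w2 \<prec> a" "w2' \<prec> a" "a \<otimes> w1 \<oplus> w2 = a \<otimes> w1' \<oplus> w2'"
  shows "w1 = w1' \<and> w2 = w2'"
proof -
  have "w1 = w1'" using trichotomy[of w1 w1'] uniq_lemma assms by metis
  then show ?thesis using assms(3) add_left_cancel by blast
qed

lemma division:
  assumes "u \<prec> b \<otimes> b"
  shows "\<exists>q r. q \<prec> b \<and> r \<prec> b \<and> u = b \<otimes> q \<oplus> r"
proof -
  have "u \<prec> b \<otimes> b \<longrightarrow> (\<exists>q. q \<prec> b \<and> (\<exists>r. r \<prec> b \<and> u = b \<otimes> q \<oplus> r))"
  proof (rule ind[where P="\<lambda>u. u \<prec> b \<otimes> b \<longrightarrow> (\<exists>q. q \<prec> b \<and> (\<exists>r. r \<prec> b \<and> u = b \<otimes> q \<oplus> r))"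
      and \<phi>="Disj (Neg (Lt (Var 0) (Times (Var 1) (Var 1)))) (fm.Ex 2 (Conj (Lt (Var 2) (Var 1)) (fm.Ex 3 (Conj (Lt (Var 3) (Var 1)) (Eq (Var 0) (Plus (Times (Var 1) (Var 2)) (Var 3)))))))"
      and e="(\<lambda>_. Zr)(1:=b)" and v=0])
    show "delta0 (Disj (Neg (Lt (Var 0) (Times (Var 1) (Var 1)))) (fm.Ex 2 (Conj (Lt (Var 2) (Var 1)) (fm.Ex 3 (Conj (Lt (Var 3) (Var 1)) (Eq (Var 0) (Plus (Times (Var 1) (Var 2)) (Var 3))))))))"
      by (intro delta0_Disj delta0.intros) auto
  next
    show "Zr \<prec> b \<otimes> b \<longrightarrow> (\<exists>q. q \<prec> b \<and> (\<exists>r. r \<prec> b \<and> Zr = b \<otimes> q \<oplus> r))"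
    proof
      assume "Zr \<prec> b \<otimes> b"
      then have "b \<noteq> Zr" using less_irrefl mul_Z by metis
      then have "Zr \<prec> b" using Z_less by blast
      then show "\<exists>q. q \<prec> b \<and> (\<exists>r. r \<prec> b \<and> Zr = b \<otimes> q \<oplus> r)" by (metis add_Z mul_Z)
    qed
  next
    fix u
    assume IH: "u \<prec> b \<otimes> b \<longrightarrow> (\<exists>q. q \<prec> b \<and> (\<exists>r. r \<prec> b \<and> u = b \<otimes> q \<oplus> r))"
    show "Sc u \<prec> b \<otimes> b \<longrightarrow> (\<exists>q. q \<prec> b \<and> (\<exists>r. r \<prec> b \<and> Sc u = b \<otimes> q \<oplus> r))"
    proof
      assume su: "Sc u \<prec> b \<otimes> b"
      then have "u \<prec> b \<otimes> b" using S_self less_trans by blast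
      then obtain q r where qr: "q \<prec> b" "r \<prec> b" "u = b \<otimes> q \<oplus> r" using IH by blast
      have su2: "Sc u = b \<otimes> q \<oplus> Sc r" using qr(3) by (simp add: add_S)
      show "\<exists>q. q \<prec> b \<and> (\<exists>r. r \<prec> b \<and> Sc u = b \<otimes> q \<oplus> r)"
      proof (cases "Sc r = b")
        case False
        then have "Sc r \<prec> b" using less_imp_S_le[OF qr(2)] by blast
        then show ?thesis using su2 qr(1) by blast
      next
        case True
        then have su3: "Sc u = b \<otimes> Sc q \<oplus> Zr" using su2 by (simp add: mul_S add_Z)
        have "Sc q \<noteq> b"
        proof
          assume "Sc q = b"
          then have "Sc u = b \<otimes> b" using su3 by (simp add: add_Z)
          then show False using su less_irrefl by metis
        qed
        then have "Sc q \<prec> b" using less_imp_S_le[OF qr(1)] by blast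
        moreover have "Zr \<prec> b" using qr(1) Z_less not_less_Z by metis
        ultimately show ?thesis using su3 by blast
      qed
    qed
  next
    fix u
    show "(u \<prec> b \<otimes> b \<longrightarrow> (\<exists>q. q \<prec> b \<and> (\<exists>r. r \<prec> b \<and> u = b \<otimes> q \<oplus> r))) =
      sat M (((\<lambda>_. Zr)(1 := b))(0 := u)) (Disj (Neg (Lt (Var 0) (Times (Var 1) (Var 1)))) (fm.Ex 2 (Conj (Lt (Var 2) (Var 1)) (fm.Ex 3 (Conj (Lt (Var 3) (Var 1)) (Eq (Var 0) (Plus (Times (Var 1) (Var 2)) (Var 3))))))))"
      by simp
  qed
  then show ?thesis using assms by blast
qed

end




lemma SC_elim:
  assumes "b \<in> SigmaCard n M a"
  obtains R where "\<And>i j. i < 100 \<Longrightarrow> j < 100 \<Longrightarrow> i \<noteq> j \<Longrightarrow> SD n M (\<lambda>E. R (E i) (E j))"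
    "\<And>u w. R u w \<Longrightarrow> lss M u b \<and> lss M w a" "\<And>u. lss M u b \<Longrightarrow> \<exists>!w. R u w"
    "\<And>u u' w. R u w \<Longrightarrow> R u' w \<Longrightarrow> u = u'"
proof -
  obtain \<phi> x y e where \<phi>: "sigma n \<phi>" "x \<noteq> y"
    and c1: "\<forall>u w. sat M (e(x := u, y := w)) \<phi> \<longrightarrow> lss M u b \<and> lss M w a"
    and c2: "\<forall>u. lss M u b \<longrightarrow> (\<exists>!w. sat M (e(x := u, y := w)) \<phi>)"
    and c3: "\<forall>u u' w. sat M (e(x := u, y := w)) \<phi> \<longrightarrow> sat M (e(x := u', y := w)) \<phi> \<longrightarrow> u = u'"
    using assms unfolding SigmaCard_def Let_def by blast
  define R where "R = (\<lambda>u w. sat M (e(x := u, y := w)) \<phi>)"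
  have SDR: "SD n M (\<lambda>E. R (E i) (E j))" if ij: "i < 100" "j < 100" "i \<noteq> j" for i j
  proof -
    define f where "f = (\<lambda>k. if k = x then i else if k = y then j else 4*k+400)"
    define g where "g = (\<lambda>k::nat. 4*k+401)"
    define p where "p = (\<lambda>m::nat. e ((m - 400) div 4))"
    have ig: "inj g" by (auto simp: inj_def g_def)
    have fg: "f a \<noteq> g b" for a b
      using ij m4[of "a+100" 0 "b+100" 1] by (auto simp: f_def g_def)
    have eq: "(\<lambda>k. if k \<in> {} then mrg E p (g k) else mrg E p (f k)) = e(x := E i, y := E j)" for E
      using ij \<phi>(2) by (auto simp: fun_eq_iff f_def mrg_def p_def)
    have "sat M (mrg E p) (ftr f g {} \<phi>) \<longleftrightarrow> R (E i) (E j)" for E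
      unfolding sat_ftr[OF ig fg] eq R_def ..
    then show ?thesis unfolding SD_def using sigma_ftr(1)[OF ig fg \<phi>(1)]
      by (intro exI[of _ "ftr f g {} \<phi>"] exI[of _ p]) auto
  qed
  show ?thesis
    by (rule that[of R]) (use SDR c1 c2 c3 in \<open>auto simp: R_def\<close>)
qed

lemma SC_intro:
  assumes "SD n M (\<lambda>E. R (E 0) (E 1))"
    "\<And>u w. R u w \<Longrightarrow> lss M u b \<and> lss M w a" "\<And>u. lss M u b \<Longrightarrow> \<exists>!w. R u w"
    "\<And>u u' w. R u w \<Longrightarrow> R u' w \<Longrightarrow> u = u'"
  shows "b \<in> SigmaCard n M a"
proof -
  obtain \<phi> p where \<phi>: "sigma n \<phi>" "\<forall>E. R (E 0) (E 1) \<longleftrightarrow> sat M (mrg E p) \<phi>"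
    using assms(1) unfolding SD_def by blast
  define E0 :: "nat \<Rightarrow> 'a" where "E0 = (\<lambda>_. undefined)"
  have key: "sat M ((mrg E0 p)(0 := u, 1 := w)) \<phi> \<longleftrightarrow> R u w" for u w
  proof -
    have "(mrg E0 p)(0 := u, 1 := w) = mrg (E0(0 := u, 1 := w)) p"
      by (auto simp: fun_eq_iff mrg_def)
    then show ?thesis using \<phi>(2)[rule_format, of "E0(0 := u, 1 := w)"] by simp
  qed
  show ?thesis unfolding SigmaCard_def Let_def
    using \<phi>(1) key assms(2-4)
    by (intro CollectI exI[of _ \<phi>] exI[of _ "0::nat"] exI[of _ "1::nat"] exI[of _ "mrg E0 p"]) auto
qed

lemma SC_refl: "a \<in> SigmaCard n M a"
proof (rule SC_intro[where R="\<lambda>u w. lss M u a \<and> w = u"])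
  show "SD n M (\<lambda>E. lss M (E 0) a \<and> E 1 = E 0)"
    by (rule SD_delta0[where \<phi>="Conj (Lt (Var 0) (Var 100)) (Eq (Var 1) (Var 0))" and p="\<lambda>_. a"])
       (auto intro: delta0.intros simp: mrg_def)
next
  show "\<And>u. lss M u a \<Longrightarrow> \<exists>!w. lss M u a \<and> w = u" by simp
qed auto

lemma SC_trans:
  assumes "c \<in> SigmaCard n M b" "b \<in> SigmaCard n M a"
  shows "c \<in> SigmaCard n M a"
proof -
  obtain R1 where R1: "\<And>i j. i < 100 \<Longrightarrow> j < 100 \<Longrightarrow> i \<noteq> j \<Longrightarrow> SD n M (\<lambda>E. R1 (E i) (E j))"
    "\<And>u w. R1 u w \<Longrightarrow> lss M u c \<and> lss M w b" "\<And>u. lss M u c \<Longrightarrow> \<exists>!w. R1 u w"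
    "\<And>u u' w. R1 u w \<Longrightarrow> R1 u' w \<Longrightarrow> u = u'"
    by (rule SC_elim[OF assms(1)]) blast
  obtain R2 where R2: "\<And>i j. i < 100 \<Longrightarrow> j < 100 \<Longrightarrow> i \<noteq> j \<Longrightarrow> SD n M (\<lambda>E. R2 (E i) (E j))"
    "\<And>u w. R2 u w \<Longrightarrow> lss M u b \<and> lss M w a" "\<And>u. lss M u b \<Longrightarrow> \<exists>!w. R2 u w"
    "\<And>u u' w. R2 u w \<Longrightarrow> R2 u' w \<Longrightarrow> u = u'"
    by (rule SC_elim[OF assms(2)]) blast
  have "SD n M (\<lambda>E. \<exists>u. lss M u b \<and> (R1 ((E(2:=u)) 0) ((E(2:=u)) 2) \<and> R2 ((E(2:=u)) 2) ((E(2:=u)) 1)))"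
    by (rule SD_bex[OF SD_conj[OF R1(1) R2(1)]]) auto
  then have sd: "SD n M (\<lambda>E. (\<lambda>u v. \<exists>w. lss M w b \<and> R1 u w \<and> R2 w v) (E 0) (E 1))"
    by (rule SD_cong) auto
  show ?thesis
  proof (rule SC_intro[OF sd])
    fix u w assume "\<exists>x. lss M x b \<and> R1 u x \<and> R2 x w"
    then show "lss M u c \<and> lss M w a" using R1(2) R2(2) by blast
  next
    fix u assume "lss M u c"
    then obtain v where v: "R1 u v" "\<And>v'. R1 u v' \<Longrightarrow> v' = v" using R1(3) by blast
    then have vb: "lss M v b" using R1(2) by blast
    then obtain w where w: "R2 v w" "\<And>w'. R2 v w' \<Longrightarrow> w' = w" using R2(3) by blast
    show "\<exists>!w. \<exists>x. lss M x b \<and> R1 u x \<and> R2 x w"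
      using v vb w by blast
  next
    fix u u' w assume "\<exists>x. lss M x b \<and> R1 u x \<and> R2 x w" "\<exists>x. lss M x b \<and> R1 u' x \<and> R2 x w"
    then show "u = u'" using R1(4) R2(4) by metis
  qed
qed

context IDM
begin

lemma R_fun: "(\<And>u w. R u w \<Longrightarrow> u \<prec> b \<and> w \<prec> a) \<Longrightarrow> (\<And>u. u \<prec> b \<Longrightarrow> \<exists>!w. R u w) \<Longrightarrow>
   R u w1 \<Longrightarrow> R u w2 \<Longrightarrow> w1 = w2"
  by metis

lemma SC_suc:
  assumes "b \<in> SigmaCard n M a"
  shows "Sc b \<in> SigmaCard n M (Sc a)"
proof -
  obtain R where R: "\<And>i j. i < 100 \<Longrightarrow> j < 100 \<Longrightarrow> i \<noteq> j \<Longrightarrow> SD n M (\<lambda>E. R (E i) (E j))"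
    "\<And>u w. R u w \<Longrightarrow> u \<prec> b \<and> w \<prec> a" "\<And>u. u \<prec> b \<Longrightarrow> \<exists>!w. R u w"
    "\<And>u u' w. R u w \<Longrightarrow> R u' w \<Longrightarrow> u = u'"
    by (rule SC_elim[OF assms]) blast
  have d1: "SD n M (\<lambda>E. E 0 \<prec> b)"
    by (rule SD_delta0[where \<phi>="Lt (Var 0) (Var 100)" and p="\<lambda>_. b"]) (auto intro: delta0.intros simp: mrg_def)
  have d2: "SD n M (\<lambda>E. E 0 = b \<and> E 1 = a)"
    by (rule SD_delta0[where \<phi>="Conj (Eq (Var 0) (Var 100)) (Eq (Var 1) (Var 101))"
          and p="\<lambda>k. if k = 100 then b else a"]) (auto intro: delta0.intros simp: mrg_def)
  have sd: "SD n M (\<lambda>E. (\<lambda>u w. (u \<prec> b \<and> R u w) \<or> (u = b \<and> w = a)) (E 0) (E 1))"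
    using SD_disj[OF SD_conj[OF d1 R(1)[of 0 1]] d2] by simp
  show ?thesis
  proof (rule SC_intro[OF sd])
    fix u w assume "u \<prec> b \<and> R u w \<or> u = b \<and> w = a"
    then show "u \<prec> Sc b \<and> w \<prec> Sc a" using R(2) less_S_iff by blast
  next
    fix u assume u: "u \<prec> Sc b"
    show "\<exists>!w. u \<prec> b \<and> R u w \<or> u = b \<and> w = a"
    proof (cases "u = b")
      case True
      then show ?thesis using less_irrefl by blast
    next
      case False
      then have "u \<prec> b" using u less_S_iff by blast
      then show ?thesis using R(3) False by blast
    qed
  next
    fix u u' w assume "u \<prec> b \<and> R u w \<or> u = b \<and> w = a" "u' \<prec> b \<and> R u' w \<or> u' = b \<and> w = a"
    then show "u = u'" using R(2) R(4) less_irrefl by metis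
  qed
qed


lemma SC_double:
  assumes "b \<in> SigmaCard n M a"
  shows "b \<oplus> b \<in> SigmaCard n M (a \<oplus> a)"
proof -
  obtain R where R: "\<And>i j. i < 100 \<Longrightarrow> j < 100 \<Longrightarrow> i \<noteq> j \<Longrightarrow> SD n M (\<lambda>E. R (E i) (E j))"
    "\<And>u w. R u w \<Longrightarrow> u \<prec> b \<and> w \<prec> a" "\<And>u. u \<prec> b \<Longrightarrow> \<exists>!w. R u w"
    "\<And>u u' w. R u w \<Longrightarrow> R u' w \<Longrightarrow> u = u'"
    by (rule SC_elim[OF assms]) blast
  have Rf: "R u w1 \<Longrightarrow> R u w2 \<Longrightarrow> w1 = w2" for u w1 w2 using R(2,3) by metis
  define Q where "Q = (\<lambda>u w u' w'. (u = u' \<and> w = w') \<or> (u = b \<oplus> u' \<and> w = a \<oplus> w'))"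
  have d: "SD n M (\<lambda>E. Q (E 0) (E 1) (E 2) (E 3))"
    by (rule SD_delta0[where \<phi>="Disj (Conj (Eq (Var 0) (Var 2)) (Eq (Var 1) (Var 3)))
          (Conj (Eq (Var 0) (Plus (Var 100) (Var 2))) (Eq (Var 1) (Plus (Var 101) (Var 3))))"
          and p="\<lambda>k. if k = 100 then b else a"]) (auto intro!: delta0.intros delta0_Disj simp: mrg_def Q_def)
  have "SD n M (\<lambda>E. \<exists>u. u \<prec> b \<and> (\<lambda>E. \<exists>u. u \<prec> a \<and> (R ((E(3:=u)) 2) ((E(3:=u)) 3) \<and>
          Q ((E(3:=u)) 0) ((E(3:=u)) 1) ((E(3:=u)) 2) ((E(3:=u)) 3))) (E(2:=u)))"
    by (rule SD_bex[OF SD_bex[OF SD_conj[OF R(1)[of 2 3] d]]]) auto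
  then have sd: "SD n M (\<lambda>E. (\<lambda>u w. \<exists>u'. u' \<prec> b \<and> (\<exists>w'. w' \<prec> a \<and> R u' w' \<and> Q u w u' w')) (E 0) (E 1))"
    by (rule SD_cong) simp
  show ?thesis
  proof (rule SC_intro[OF sd])
    fix u w assume "\<exists>u'. u' \<prec> b \<and> (\<exists>w'. w' \<prec> a \<and> R u' w' \<and> Q u w u' w')"
    then obtain u' w' where h: "u' \<prec> b" "w' \<prec> a" "Q u w u' w'" by blast
    have bb: "u' \<prec> b \<oplus> b" using h(1) le_add_less[of b b] not_less_Z less_trans by metis
    have aa: "w' \<prec> a \<oplus> a" using h(2) le_add_less[of a a] not_less_Z less_trans by metis
    show "u \<prec> b \<oplus> b \<and> w \<prec> a \<oplus> a"
      using h(3) bb aa add_less_mono_left h(1,2) unfolding Q_def by blast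
  next
    fix u assume u: "u \<prec> b \<oplus> b"
    have ex: "u \<prec> b \<or> (\<exists>u'. u' \<prec> b \<and> u = b \<oplus> u')"
    proof -
      have bZ: "b \<noteq> Zr" using u not_less_Z add_Z by metis
      consider "u \<prec> b" | "u = b" | "b \<prec> u" using trichotomy by blast
      then show ?thesis
      proof cases
        case 2 then show ?thesis using Z_less[OF bZ] add_Z by metis
      next
        case 3
        then obtain z where z: "b \<oplus> Sc z = u" unfolding less_def by blast
        then have "Sc z \<prec> b" using u less_add_cancel_left by blast
        then show ?thesis using z by blast
      qed simp
    qed
    show "\<exists>!w. \<exists>u'. u' \<prec> b \<and> (\<exists>w'. w' \<prec> a \<and> R u' w' \<and> Q u w u' w')"
    proof (rule ex_ex1I)
      show "\<exists>w u'. u' \<prec> b \<and> (\<exists>w'. w' \<prec> a \<and> R u' w' \<and> Q u w u' w')"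
        using ex
      proof
        assume "u \<prec> b"
        then obtain w' where "R u w'" using R(3) by blast
        then show ?thesis using R(2) \<open>u \<prec> b\<close> unfolding Q_def by blast
      next
        assume "\<exists>u'. u' \<prec> b \<and> u = b \<oplus> u'"
        then obtain u' where u': "u' \<prec> b" "u = b \<oplus> u'" by blast
        then obtain w' where "R u' w'" using R(3) by blast
        then show ?thesis using R(2) u' unfolding Q_def by blast
      qed
    next
      fix w1 w2
      assume "\<exists>u'. u' \<prec> b \<and> (\<exists>w'. w' \<prec> a \<and> R u' w' \<and> Q u w1 u' w')"
        "\<exists>u'. u' \<prec> b \<and> (\<exists>w'. w' \<prec> a \<and> R u' w' \<and> Q u w2 u' w')"
      then obtain u1 w1' u2 w2' where h: "u1 \<prec> b" "R u1 w1'" "Q u w1 u1 w1'"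
        "u2 \<prec> b" "R u2 w2'" "Q u w2 u2 w2'" by blast
      show "w1 = w2"
        using h Rf add_less_self add_left_cancel unfolding Q_def by metis
    qed
  next
    fix u u' w
    assume "\<exists>u'. u' \<prec> b \<and> (\<exists>w'. w' \<prec> a \<and> R u' w' \<and> Q u w u' w')"
      "\<exists>u'a. u'a \<prec> b \<and> (\<exists>w'. w' \<prec> a \<and> R u'a w' \<and> Q u' w u'a w')"
    then obtain u1 w1' u2 w2' where h: "w1' \<prec> a" "R u1 w1'" "Q u w u1 w1'"
        "w2' \<prec> a" "R u2 w2'" "Q u' w u2 w2'" by blast
    show "u = u'"
      using h R(4) add_less_self add_left_cancel unfolding Q_def by metis
  qed
qed

lemma SC_square:
  assumes "b \<in> SigmaCard n M a"
  shows "b \<otimes> b \<in> SigmaCard n M (a \<otimes> a)"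
proof -
  obtain R where R: "\<And>i j. i < 100 \<Longrightarrow> j < 100 \<Longrightarrow> i \<noteq> j \<Longrightarrow> SD n M (\<lambda>E. R (E i) (E j))"
    "\<And>u w. R u w \<Longrightarrow> u \<prec> b \<and> w \<prec> a" "\<And>u. u \<prec> b \<Longrightarrow> \<exists>!w. R u w"
    "\<And>u u' w. R u w \<Longrightarrow> R u' w \<Longrightarrow> u = u'"
    by (rule SC_elim[OF assms]) blast
  have Rf: "R u w1 \<Longrightarrow> R u w2 \<Longrightarrow> w1 = w2" for u w1 w2 using R(2,3) by metis
  define G where "G = (\<lambda>u w q r w1 w2. R q w1 \<and> R r w2 \<and> u = b \<otimes> q \<oplus> r \<and> w = a \<otimes> w1 \<oplus> w2)"
  have d: "SD n M (\<lambda>E. E 0 = b \<otimes> E 2 \<oplus> E 3 \<and> E 1 = a \<otimes> E 4 \<oplus> E 5)"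
    by (rule SD_delta0[where \<phi>="Conj (Eq (Var 0) (Plus (Times (Var 100) (Var 2)) (Var 3)))
          (Eq (Var 1) (Plus (Times (Var 101) (Var 4)) (Var 5)))"
          and p="\<lambda>k. if k = 100 then b else a"]) (auto intro!: delta0.intros simp: mrg_def)
  have c: "SD n M (\<lambda>E. G (E 0) (E 1) (E 2) (E 3) (E 4) (E 5))"
    using SD_conj[OF R(1)[of 2 4] SD_conj[OF R(1)[of 3 5] d]] unfolding G_def by simp
  have "SD n M (\<lambda>E. \<exists>q. q \<prec> b \<and> (\<lambda>E. \<exists>r. r \<prec> b \<and> (\<lambda>E. \<exists>w1. w1 \<prec> a \<and>
     (\<lambda>E. \<exists>w2. w2 \<prec> a \<and> G ((E(5:=w2)) 0) ((E(5:=w2)) 1) ((E(5:=w2)) 2) ((E(5:=w2)) 3) ((E(5:=w2)) 4) ((E(5:=w2)) 5))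
       (E(4:=w1))) (E(3:=r))) (E(2:=q)))"
    by (rule SD_bex[OF SD_bex[OF SD_bex[OF SD_bex[OF c]]]]) auto
  then have sd: "SD n M (\<lambda>E. (\<lambda>u w. \<exists>q. q \<prec> b \<and> (\<exists>r. r \<prec> b \<and> (\<exists>w1. w1 \<prec> a \<and>
      (\<exists>w2. w2 \<prec> a \<and> G u w q r w1 w2)))) (E 0) (E 1))"
    by (rule SD_cong) simp
  show ?thesis
  proof (rule SC_intro[OF sd])
    fix u w assume "\<exists>q. q \<prec> b \<and> (\<exists>r. r \<prec> b \<and> (\<exists>w1. w1 \<prec> a \<and> (\<exists>w2. w2 \<prec> a \<and> G u w q r w1 w2)))"
    then show "u \<prec> b \<otimes> b \<and> w \<prec> a \<otimes> a" using range_lemma unfolding G_def by blast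
  next
    fix u assume u: "u \<prec> b \<otimes> b"
    show "\<exists>!w. \<exists>q. q \<prec> b \<and> (\<exists>r. r \<prec> b \<and> (\<exists>w1. w1 \<prec> a \<and> (\<exists>w2. w2 \<prec> a \<and> G u w q r w1 w2)))"
    proof (rule ex_ex1I)
      obtain q r where qr: "q \<prec> b" "r \<prec> b" "u = b \<otimes> q \<oplus> r" using division[OF u] by blast
      obtain w1 where w1: "R q w1" using R(3) qr(1) by blast
      obtain w2 where w2: "R r w2" using R(3) qr(2) by blast
      show "\<exists>w q. q \<prec> b \<and> (\<exists>r. r \<prec> b \<and> (\<exists>w1. w1 \<prec> a \<and> (\<exists>w2. w2 \<prec> a \<and> G u w q r w1 w2)))"
        using qr w1 w2 R(2) unfolding G_def by blast
    next
      fix x y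
      assume "\<exists>q. q \<prec> b \<and> (\<exists>r. r \<prec> b \<and> (\<exists>w1. w1 \<prec> a \<and> (\<exists>w2. w2 \<prec> a \<and> G u x q r w1 w2)))"
        "\<exists>q. q \<prec> b \<and> (\<exists>r. r \<prec> b \<and> (\<exists>w1. w1 \<prec> a \<and> (\<exists>w2. w2 \<prec> a \<and> G u y q r w1 w2)))"
      then obtain q r w1 w2 q' r' w1' w2' where h: "r \<prec> b" "r' \<prec> b"
        "R q w1" "R r w2" "u = b \<otimes> q \<oplus> r" "x = a \<otimes> w1 \<oplus> w2"
        "R q' w1'" "R r' w2'" "u = b \<otimes> q' \<oplus> r'" "y = a \<otimes> w1' \<oplus> w2'"
        unfolding G_def by blast
      have "q = q' \<and> r = r'" using uniq[OF h(1,2), of q q'] h(5,9) by simp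
      then show "x = y" using h Rf by metis
    qed
  next
    fix u u' w
    assume "\<exists>q. q \<prec> b \<and> (\<exists>r. r \<prec> b \<and> (\<exists>w1. w1 \<prec> a \<and> (\<exists>w2. w2 \<prec> a \<and> G u w q r w1 w2)))"
      "\<exists>q. q \<prec> b \<and> (\<exists>r. r \<prec> b \<and> (\<exists>w1. w1 \<prec> a \<and> (\<exists>w2. w2 \<prec> a \<and> G u' w q r w1 w2)))"
    then obtain q r w1 w2 q' r' w1' w2' where h: "w2 \<prec> a" "w2' \<prec> a"
        "R q w1" "R r w2" "u = b \<otimes> q \<oplus> r" "w = a \<otimes> w1 \<oplus> w2"
        "R q' w1'" "R r' w2'" "u' = b \<otimes> q' \<oplus> r'" "w = a \<otimes> w1' \<oplus> w2'"
        unfolding G_def by blast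
    have "w1 = w1' \<and> w2 = w2'" using uniq[OF h(1,2), of w1 w1'] h(6,10) by simp
    then show "u = u'" using h R(4) by metis
  qed
qed

end

theorem proposition6p5:
  fixes n :: nat and M :: "'a struc" and a :: 'a
  assumes "IDelta0_model M"
  shows "(suc M a \<in> SigmaCard n M a \<longleftrightarrow>
            (\<forall>x \<in> SigmaCard n M a. suc M x \<in> SigmaCard n M a))
       \<and> (pls M a a \<in> SigmaCard n M a \<longleftrightarrow>
            (\<forall>x \<in> SigmaCard n M a. pls M x x \<in> SigmaCard n M a))
       \<and> (tms M a a \<in> SigmaCard n M a \<longleftrightarrow>
            (\<forall>x \<in> SigmaCard n M a. tms M x x \<in> SigmaCard n M a))"
proof -
  interpret IDM M by (rule IDM.intro[OF assms])
  have r: "a \<in> SigmaCard n M a" by (rule SC_refl)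
  have 1: "suc M a \<in> SigmaCard n M a \<longleftrightarrow> (\<forall>x \<in> SigmaCard n M a. suc M x \<in> SigmaCard n M a)"
  proof
    assume h: "suc M a \<in> SigmaCard n M a"
    show "\<forall>x \<in> SigmaCard n M a. suc M x \<in> SigmaCard n M a"
      using SC_trans[OF SC_suc h] by blast
  qed (use r in blast)
  have 2: "pls M a a \<in> SigmaCard n M a \<longleftrightarrow> (\<forall>x \<in> SigmaCard n M a. pls M x x \<in> SigmaCard n M a)"
  proof
    assume h: "pls M a a \<in> SigmaCard n M a"
    show "\<forall>x \<in> SigmaCard n M a. pls M x x \<in> SigmaCard n M a"
      using SC_trans[OF SC_double h] by blast
  qed (use r in blast)
  have 3: "tms M a a \<in> SigmaCard n M a \<longleftrightarrow> (\<forall>x \<in> SigmaCard n M a. tms M x x \<in> SigmaCard n M a)"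
  proof
    assume h: "tms M a a \<in> SigmaCard n M a"
    show "\<forall>x \<in> SigmaCard n M a. tms M x x \<in> SigmaCard n M a"
      using SC_trans[OF SC_square h] by blast
  qed (use r in blast)
  show ?thesis using 1 2 3 by blast
qed


end
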